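(* Let $S \subseteq \mathbb{R}^n$ be nonempty, closed and convex, let $F = (F_1,\dots,F_m)^\top \colon S\to\mathbb{R}^m$ be continuous with each $F_i$ $\sigma_i$-convex for some $\sigma_i > 0$, let $\ell \ge 0$, and define $u_\ell(x) := \sup_{y \in S}\min_{i=1,\dots,m}\{F_i(x) - F_i(y) - \frac{\ell}{2}\|x-y\|^2\}$, $x \in S$. Let $\sigma := \min_{i} \sigma_i$ and \[ \upsilon(\sigma) := \begin{cases} \frac{\sigma - \ell}{2}, & \text{if } \ell < \sigma/2,\\ \frac{\sigma^2}{8\ell}, & \text{otherwise}. \end{cases} \] Then $u_\ell(x) \ge \upsilon(\sigma) \inf_{x^\ast \in X^\ast}\|x - x^\ast\|^2$ for all $x \in S$, where $X^\ast$ is the set of Pareto optimal solutions of $\min_{x\in S}F(x)$.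
   Context: A function $h\colon S\to\mathbb{R}$ is $\sigma$-convex if $h(\alpha x + (1-\alpha)y) \le \alpha h(x) + (1-\alpha)h(y) - \frac{\alpha(1-\alpha)\sigma}{2}\|x-y\|^2$ for all $x,y\in S$, $\alpha\in[0,1]$. A point $x^\ast\in S$ is Pareto optimal if there is no $x\in S$ with $F_i(x)\le F_i(x^\ast)$ for all $i$ and $F(x)\ne F(x^\ast)$. *)

theory Defs
  imports "HOL-Analysis.Analysis"
begin

definition sigma_convex_on :: "'a::real_normed_vector set \<Rightarrow> real \<Rightarrow> ('a \<Rightarrow> real) \<Rightarrow> bool" where
  "sigma_convex_on S \<sigma> h \<longleftrightarrow>
     (\<forall>x\<in>S. \<forall>y\<in>S. \<forall>\<alpha>::real. 0 \<le> \<alpha> \<and> \<alpha> \<le> 1 \<longrightarrow>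
        h (\<alpha> *\<^sub>R x + (1 - \<alpha>) *\<^sub>R y)
          \<le> \<alpha> * h x + (1 - \<alpha>) * h y - \<alpha> * (1 - \<alpha>) * \<sigma> / 2 * (norm (x - y))\<^sup>2)"

definition pareto_optimal :: "'a set \<Rightarrow> nat \<Rightarrow> (nat \<Rightarrow> 'a \<Rightarrow> real) \<Rightarrow> 'a \<Rightarrow> bool" where
  "pareto_optimal S m F xs \<longleftrightarrow> xs \<in> S \<and>
     \<not> (\<exists>x\<in>S. (\<forall>i<m. F i x \<le> F i xs) \<and> (\<exists>i<m. F i x \<noteq> F i xs))"

definition merit_u :: "'a::real_normed_vector set \<Rightarrow> nat \<Rightarrow> (nat \<Rightarrow> 'a \<Rightarrow> real) \<Rightarrow> real \<Rightarrow> 'a \<Rightarrow> real" where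
  "merit_u S m F l x = (SUP y\<in>S. Min ((\<lambda>i. F i x - F i y - l / 2 * (norm (x - y))\<^sup>2) ` {..<m}))"

definition upsilon :: "real \<Rightarrow> real \<Rightarrow> real" where
  "upsilon l \<sigma> = (if l < \<sigma> / 2 then (\<sigma> - l) / 2 else \<sigma>\<^sup>2 / (8 * l))"

end

theory Submission
  imports Defs
begin


lemma sc_mono:
  assumes "sigma_convex_on S s h" "t \<le> s"
  shows "sigma_convex_on S t h"
proof -
  have "h (a *\<^sub>R x + (1 - a) *\<^sub>R y) \<le> a * h x + (1 - a) * h y - a * (1 - a) * t / 2 * (norm (x - y))\<^sup>2"
    if xy: "x \<in> S" "y \<in> S" and a: "0 \<le> a" "a \<le> 1" for x y a
  proof -
    have "a * (1 - a) * t / 2 * (norm (x - y))\<^sup>2 \<le> a * (1 - a) * s / 2 * (norm (x - y))\<^sup>2"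
      using a assms(2) by (intro mult_right_mono divide_right_mono mult_left_mono) auto
    thus ?thesis using assms(1) xy a unfolding sigma_convex_on_def by fastforce
  qed
  thus ?thesis unfolding sigma_convex_on_def by blast
qed

lemma sc_Max:
  assumes "finite I" "I \<noteq> {}" "\<And>i. i \<in> I \<Longrightarrow> sigma_convex_on S s (g i)"
  shows "sigma_convex_on S s (\<lambda>y. Max ((\<lambda>i. g i y) ` I))"
proof -
  have "Max ((\<lambda>i. g i (a *\<^sub>R x + (1 - a) *\<^sub>R y)) ` I) \<le> a * Max ((\<lambda>i. g i x) ` I) + (1 - a) * Max ((\<lambda>i. g i y) ` I) - a * (1 - a) * s / 2 * (norm (x - y))\<^sup>2"
    if xy: "x \<in> S" "y \<in> S" and a: "0 \<le> a" "a \<le> 1" for x y a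
  proof -
    have "g i (a *\<^sub>R x + (1 - a) *\<^sub>R y) \<le> a * Max ((\<lambda>i. g i x) ` I) + (1 - a) * Max ((\<lambda>i. g i y) ` I) - a * (1 - a) * s / 2 * (norm (x - y))\<^sup>2"
      if i: "i \<in> I" for i
    proof -
      have "g i (a *\<^sub>R x + (1 - a) *\<^sub>R y) \<le> a * g i x + (1 - a) * g i y - a * (1 - a) * s / 2 * (norm (x - y))\<^sup>2"
        using assms(3)[OF i] xy a unfolding sigma_convex_on_def by blast
      moreover have "a * g i x \<le> a * Max ((\<lambda>i. g i x) ` I)"
        using a i assms by (intro mult_left_mono) auto
      moreover have "(1 - a) * g i y \<le> (1 - a) * Max ((\<lambda>i. g i y) ` I)"
        using a i assms by (intro mult_left_mono) auto
      ultimately show ?thesis by linarith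
    qed
    hence "\<forall>v\<in>(\<lambda>i. g i (a *\<^sub>R x + (1 - a) *\<^sub>R y)) ` I. v \<le> a * Max ((\<lambda>i. g i x) ` I) + (1 - a) * Max ((\<lambda>i. g i y) ` I) - a * (1 - a) * s / 2 * (norm (x - y))\<^sup>2"
      by blast
    thus ?thesis using assms(1,2) by (subst Max_le_iff) simp_all
  qed
  thus ?thesis unfolding sigma_convex_on_def by blast
qed

lemma cont_Max:
  assumes "finite I" "I \<noteq> {}" "\<And>i. i \<in> I \<Longrightarrow> continuous_on S (g i)"
  shows "continuous_on S (\<lambda>y. Max ((\<lambda>i. g i y :: real) ` I))"
  using assms
proof (induction I rule: finite_ne_induct)
  case (singleton x)
  then show ?case by simp
next
  case (insert x F)
  have "(\<lambda>y. Max ((\<lambda>i. g i y) ` insert x F)) = (\<lambda>y. max (g x y) (Max ((\<lambda>i. g i y) ` F)))"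
    using insert by (simp add: Max_insert)
  then show ?case using insert by (auto intro!: continuous_on_max)
qed

lemma sc_min:
  fixes S :: "'a::euclidean_space set"
  assumes "S \<noteq> {}" "closed S" "convex S" "continuous_on S h" "s > 0" "sigma_convex_on S s h"
  shows "\<exists>z\<in>S. \<forall>y\<in>S. h z \<le> h y"
proof -
  obtain x where x: "x \<in> S" using assms(1) by blast
  have "compact (S \<inter> cball x 1)" using assms(2) by (intro closed_Int_compact compact_cball)
  moreover have "S \<inter> cball x 1 \<noteq> {}" using x by auto
  ultimately obtain z0 where z0: "z0 \<in> S \<inter> cball x 1" "\<forall>y\<in>S \<inter> cball x 1. h z0 \<le> h y"
    using continuous_attains_inf[of "S \<inter> cball x 1" h, OF _ _ continuous_on_subset[OF assms(4)]] by blast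
  define m0 where "m0 = h z0"
  define r where "r = 2 + 2 * \<bar>h x - m0\<bar> / s"
  have q0: "2 * \<bar>h x - m0\<bar> / s \<ge> 0" using assms(5) by simp
  have r1: "r > 1" using q0 unfolding r_def by linarith
  have far: "h y > h x" if y: "y \<in> S" "norm (y - x) > r" for y
  proof -
    define R where "R = norm (y - x)"
    have R1: "R > 1" using r1 y R_def by auto
    define a where "a = 1 / R"
    have a: "0 \<le> a" "a \<le> 1" using R1 a_def by auto
    have aR: "a * R = 1" using R1 a_def by simp
    define z where "z = a *\<^sub>R y + (1 - a) *\<^sub>R x"
    have zS: "z \<in> S" using assms(3) y x a unfolding z_def convex_def by auto
    have "x - z = a *\<^sub>R (x - y)" unfolding z_def by (simp add: algebra_simps)
    hence "norm (x - z) = a * norm (x - y)" using a by simp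
    also have "norm (x - y) = R" unfolding R_def by (rule norm_minus_commute)
    finally have "dist x z = 1" using aR by (simp add: dist_norm)
    hence "z \<in> S \<inter> cball x 1" using zS by simp
    hence "m0 \<le> h z" using z0 unfolding m0_def by blast
    also have "h z \<le> a * h y + (1 - a) * h x - a * (1 - a) * s / 2 * (norm (y - x))\<^sup>2"
      using assms(6) y x a unfolding sigma_convex_on_def z_def by blast
    also have "a * (1 - a) * s / 2 * (norm (y - x))\<^sup>2 = (R - 1) * s / 2"
    proof -
      have "a * (1 - a) * s / 2 * (norm (y - x))\<^sup>2 = (a * R) * (R - a * R) * s / 2"
        unfolding R_def[symmetric] by (simp add: algebra_simps power2_eq_square)
      thus ?thesis using aR by simp
    qed
    finally have m0le: "m0 \<le> a * (h y - h x) + h x - (R - 1) * s / 2" by (simp add: algebra_simps)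
    have "(R - 1) * s / 2 > h x - m0"
    proof -
      have "R - 1 > 1 + 2 * \<bar>h x - m0\<bar> / s" using y R_def r_def by simp
      hence "(R - 1) * s > (1 + 2 * \<bar>h x - m0\<bar> / s) * s" using assms(5) by (intro mult_strict_right_mono) auto
      also have "(1 + 2 * \<bar>h x - m0\<bar> / s) * s = s + 2 * \<bar>h x - m0\<bar>" using assms(5) by (simp add: distrib_right)
      finally have T: "s + 2 * \<bar>h x - m0\<bar> < (R - 1) * s" .
      have gen: "\<And>T d. s + 2 * \<bar>d\<bar> < T \<Longrightarrow> 0 < s \<Longrightarrow> d < T / 2" by linarith
      show ?thesis using gen[OF T assms(5)] .
    qed
    hence "a * (h y - h x) > 0" using m0le by linarith
    thus ?thesis using a by (simp add: zero_less_mult_iff)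
  qed
  have "compact (S \<inter> cball x r)" using assms(2) by (intro closed_Int_compact compact_cball)
  moreover have "S \<inter> cball x r \<noteq> {}" using x r1 by auto
  ultimately obtain z where z: "z \<in> S \<inter> cball x r" "\<forall>y\<in>S \<inter> cball x r. h z \<le> h y"
    using continuous_attains_inf[of "S \<inter> cball x r" h, OF _ _ continuous_on_subset[OF assms(4)]] by blast
  have "x \<in> S \<inter> cball x r" using x r1 by simp
  hence hzx: "h z \<le> h x" using z by blast
  show ?thesis
  proof (intro bexI[of _ z] ballI)
    fix y assume y: "y \<in> S"
    show "h z \<le> h y"
    proof (cases "norm (y - x) > r")
      case True thus ?thesis using far[OF y] hzx by linarith
    next
      case False
      hence "dist x y \<le> r" by (simp add: dist_norm norm_minus_commute[of x y])
      hence "y \<in> S \<inter> cball x r" using y by simp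
      thus ?thesis using z by blast
    qed
  next
    show "z \<in> S" using z by blast
  qed
qed


lemma real_lim_aux:
  fixes A B c :: real
  assumes "\<And>a. 0 < a \<Longrightarrow> a < 1 \<Longrightarrow> A \<le> B - (1 - a) * c" "c \<ge> 0"
  shows "A \<le> B - c"
proof (rule ccontr)
  assume H: "\<not> A \<le> B - c"
  have h2: "A \<le> B - c / 2" using assms(1)[of "1/2"] by simp
  hence cpos: "c > 0" using H by linarith
  define a where "a = (A - B + c) / (2 * c)"
  have "a > 0" using H cpos unfolding a_def by (simp add: field_simps)
  moreover have "a < 1" using h2 cpos unfolding a_def by (simp add: field_simps)
  ultimately have "A \<le> B - (1 - a) * c" using assms(1) by blast
  also have "(1 - a) * c = c - (A - B + c) / 2" using cpos unfolding a_def by (simp add: field_simps)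
  finally have "A \<le> B - (c - (A - B + c) / 2)" .
  hence "2 * A \<le> A + B - c" by (simp add: field_simps)
  thus False using H by linarith
qed

lemma sc_shift:
  assumes "sigma_convex_on S s h"
  shows "sigma_convex_on S s (\<lambda>y. h y - c)"
proof -
  have "h (a *\<^sub>R x + (1 - a) *\<^sub>R y) - c \<le> a * (h x - c) + (1 - a) * (h y - c) - a * (1 - a) * s / 2 * (norm (x - y))\<^sup>2"
    if xy: "x \<in> S" "y \<in> S" and a: "0 \<le> a" "a \<le> 1" for x y a
  proof -
    have "h (a *\<^sub>R x + (1 - a) *\<^sub>R y) \<le> a * h x + (1 - a) * h y - a * (1 - a) * s / 2 * (norm (x - y))\<^sup>2"
      using assms xy a unfolding sigma_convex_on_def by blast
    thus ?thesis by (simp add: algebra_simps)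
  qed
  thus ?thesis unfolding sigma_convex_on_def by blast
qed

lemma ups_bound:
  fixes s l :: real assumes "s > 0" "l \<ge> 0"
  defines "a \<equiv> (if l < s / 2 then 1 else s / (2 * l))"
  shows "0 < a" "a \<le> 1" "upsilon l s \<le> (2 * a * s - a\<^sup>2 * (s + l)) / 2" "upsilon l s \<ge> 0"
proof -
  show "0 < a" using assms unfolding a_def by (auto simp: field_simps)
  show "a \<le> 1" using assms unfolding a_def by (auto simp: field_simps)
  show "upsilon l s \<ge> 0" using assms unfolding upsilon_def by auto
  show "upsilon l s \<le> (2 * a * s - a\<^sup>2 * (s + l)) / 2"
  proof (cases "l < s / 2")
    case True thus ?thesis unfolding a_def upsilon_def by simp
  next
    case False
    hence lp: "l > 0" "s \<le> 2 * l" using assms by auto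
    have e1: "(2 * a * s - a\<^sup>2 * (s + l)) / 2 = s\<^sup>2 * (3 * l - s) / (8 * l\<^sup>2)"
      using False lp unfolding a_def by (simp add: field_simps power2_eq_square)
    have e2: "s\<^sup>2 * (3 * l - s) / (8 * l\<^sup>2) - s\<^sup>2 / (8 * l) = s\<^sup>2 * (2 * l - s) / (8 * l\<^sup>2)"
      using lp by (simp add: field_simps power2_eq_square)
    have e3: "s\<^sup>2 * (2 * l - s) / (8 * l\<^sup>2) \<ge> 0" using lp by simp
    have e4: "upsilon l s = s\<^sup>2 / (8 * l)" using False unfolding upsilon_def by simp
    show ?thesis unfolding e1 e4 using e2 e3 by linarith
  qed
qed


theorem corollary6p2:
  fixes S :: "'n::euclidean_space set" and m :: nat and F :: "nat \<Rightarrow> 'n \<Rightarrow> real"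
    and sig :: "nat \<Rightarrow> real" and l :: real
  assumes "S \<noteq> {}" and "closed S" and "convex S"
    and "m \<ge> 1"
    and "\<And>i. i < m \<Longrightarrow> continuous_on S (F i)"
    and "\<And>i. i < m \<Longrightarrow> sig i > 0"
    and "\<And>i. i < m \<Longrightarrow> sigma_convex_on S (sig i) (F i)"
    and "l \<ge> 0"
  shows "\<forall>x\<in>S. merit_u S m F l x \<ge>
           upsilon l (Min (sig ` {..<m})) *
             (INF xs\<in>{xs. pareto_optimal S m F xs}. (norm (x - xs))\<^sup>2)"
proof
  fix x assume x: "x \<in> S"
  define s where "s = Min (sig ` {..<m})"
  have z0m: "0 \<in> {..<m}" using assms(4) by simp
  hence ne: "{..<m} \<noteq> {}" by blast
  have spos: "s > 0" unfolding s_def using ne assms(6) by (subst Min_gr_iff) auto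
  have sle: "s \<le> sig i" if "i < m" for i unfolding s_def using that by (intro Min_le) auto
  have Fs: "sigma_convex_on S s (F i)" if "i < m" for i
    using sc_mono[OF assms(7)[OF that] sle[OF that]] .
  define phi where "phi y = Max ((\<lambda>i. F i y - F i x) ` {..<m})" for y
  have phic: "continuous_on S phi" unfolding phi_def
    using ne assms(5) by (intro cont_Max continuous_on_diff continuous_on_const) auto
  have phis: "sigma_convex_on S s phi" unfolding phi_def
    using ne Fs by (intro sc_Max sc_shift) auto
  obtain xs where xs: "xs \<in> S" "\<forall>y\<in>S. phi xs \<le> phi y"
    using sc_min[OF assms(1-3) phic spos phis] by blast
  have phix: "phi x = 0" unfolding phi_def using ne
    by (simp add: image_constant_conv)
  have phige: "F i y - F i x \<le> phi y" if "i < m" for i y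
    unfolding phi_def using that by (intro Max_ge) auto
  have phile: "phi y \<le> phi xs" if "y \<in> S" "\<forall>i<m. F i y \<le> F i xs" for y
  proof -
    have "\<forall>v\<in>(\<lambda>i. F i y - F i x) ` {..<m}. v \<le> phi xs"
    proof
      fix v assume "v \<in> (\<lambda>i. F i y - F i x) ` {..<m}"
      then obtain i where i: "i < m" "v = F i y - F i x" by auto
      have "F i y - F i x \<le> F i xs - F i x" using that i by auto
      also have "\<dots> \<le> phi xs" using phige[OF i(1)] .
      finally show "v \<le> phi xs" using i by simp
    qed
    thus ?thesis unfolding phi_def using ne by (subst Max_le_iff) simp_all
  qed
  have po: "pareto_optimal S m F xs"
    unfolding pareto_optimal_def
  proof (intro conjI notI xs(1))
    assume "\<exists>z\<in>S. (\<forall>i<m. F i z \<le> F i xs) \<and> (\<exists>i<m. F i z \<noteq> F i xs)"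
    then obtain z j where z: "z \<in> S" "\<forall>i<m. F i z \<le> F i xs" "j < m" "F j z \<noteq> F j xs" by blast
    define w where "w = (1/2) *\<^sub>R z + (1 - 1/2) *\<^sub>R xs"
    have h12: "0 \<le> (1/2::real) \<and> (1/2::real) \<le> 1" by simp
    have wS: "w \<in> S" using assms(3) z xs unfolding w_def convex_def by auto
    have "phi w \<le> (1/2) * phi z + (1 - 1/2) * phi xs - (1/2) * (1 - 1/2) * s / 2 * (norm (z - xs))\<^sup>2"
      using phis z(1) xs(1) h12 unfolding sigma_convex_on_def w_def by blast
    moreover have "phi z \<le> phi xs" using phile z by blast
    moreover have "phi xs \<le> phi w" using xs wS by blast
    ultimately have "s / 8 * (norm (z - xs))\<^sup>2 \<le> 0" by simp
    hence "norm (z - xs) = 0" using spos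
      by (metis divide_pos_pos mult_le_0_iff not_less power2_less_eq_zero_iff zero_less_numeral zero_less_power2)
    thus False using z by simp
  qed
  define D where "D = (norm (x - xs))\<^sup>2"
  have D0: "D \<ge> 0" unfolding D_def by simp
  have key: "phi xs \<le> phi x - s / 2 * D"
  proof (rule real_lim_aux)
    show "0 \<le> s / 2 * D" using spos D0 by simp
    fix a :: real assume a: "0 < a" "a < 1"
    define p where "p = a *\<^sub>R x + (1 - a) *\<^sub>R xs"
    have pS: "p \<in> S" using assms(3) x xs a unfolding p_def convex_def by auto
    have "phi xs \<le> phi p" using xs pS by blast
    also have "phi p \<le> a * phi x + (1 - a) * phi xs - a * (1 - a) * s / 2 * D"
      using phis x xs a unfolding sigma_convex_on_def p_def D_def by auto
    finally have "a * phi xs \<le> a * (phi x - (1 - a) * (s / 2 * D))" by (simp add: algebra_simps)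
    thus "phi xs \<le> phi x - (1 - a) * (s / 2 * D)" using a by simp
  qed
  have Fgap: "F i x - F i xs \<ge> s / 2 * D" if "i < m" for i
    using phige[OF that, of xs] key phix by linarith
  define a where "a = (if l < s / 2 then 1 else s / (2 * l))"
  note ub = ups_bound[OF spos assms(8), folded a_def]
  define y where "y = a *\<^sub>R xs + (1 - a) *\<^sub>R x"
  have yS: "y \<in> S" using assms(3) x xs ub unfolding y_def convex_def by auto
  have nxy: "(norm (x - y))\<^sup>2 = a\<^sup>2 * D"
  proof -
    have "x - y = a *\<^sub>R (x - xs)" unfolding y_def by (simp add: algebra_simps)
    thus ?thesis using ub unfolding D_def by (simp add: power_mult_distrib)
  qed
  have each: "F i x - F i y - l / 2 * (norm (x - y))\<^sup>2 \<ge> upsilon l s * D" if i: "i < m" for i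
  proof -
    have c1: "F i y \<le> a * F i xs + (1 - a) * F i x - a * (1 - a) * s / 2 * D"
      using Fs[OF i] x xs ub unfolding sigma_convex_on_def y_def D_def
      by (metis less_eq_real_def norm_minus_commute)
    have c2: "a * (s / 2 * D) \<le> a * (F i x - F i xs)"
      using Fgap[OF i] ub by (intro mult_left_mono) auto
    have c3: "upsilon l s * D \<le> (2 * a * s - a\<^sup>2 * (s + l)) / 2 * D"
      using ub D0 by (intro mult_right_mono) auto
    have "(2 * a * s - a\<^sup>2 * (s + l)) / 2 * D = a * (s / 2 * D) + a * (1 - a) * s / 2 * D - l / 2 * (a\<^sup>2 * D)"
      by (simp add: field_simps power2_eq_square)
    moreover have c1': "F i x - F i y \<ge> a * (F i x - F i xs) + a * (1 - a) * s / 2 * D"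
      using c1 by (simp add: algebra_simps)
    ultimately show ?thesis unfolding nxy using c2 c3 by linarith
  qed
  have minge: "upsilon l s * D \<le> Min ((\<lambda>i. F i x - F i y - l / 2 * (norm (x - y))\<^sup>2) ` {..<m})"
    using ne each by (subst Min_ge_iff) auto
  have F0: "0 < m" using assms(4) by simp
  obtain z0 where z0: "z0 \<in> S" "\<forall>y\<in>S. F 0 z0 \<le> F 0 y"
    using sc_min[OF assms(1-3) assms(5)[OF F0] spos Fs[OF F0]] by blast
  have bdd: "bdd_above ((\<lambda>y. Min ((\<lambda>i. F i x - F i y - l / 2 * (norm (x - y))\<^sup>2) ` {..<m})) ` S)"
  proof (rule bdd_aboveI2)
    fix y assume y: "y \<in> S"
    have "Min ((\<lambda>i. F i x - F i y - l / 2 * (norm (x - y))\<^sup>2) ` {..<m}) \<le> F 0 x - F 0 y - l / 2 * (norm (x - y))\<^sup>2"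
      using F0 by (intro Min_le) auto
    also have "\<dots> \<le> F 0 x - F 0 z0"
    proof -
      have "F 0 z0 \<le> F 0 y" using z0 y by blast
      moreover have "0 \<le> l / 2 * (norm (x - y))\<^sup>2" using assms(8) by simp
      ultimately show ?thesis by linarith
    qed
    finally show "Min ((\<lambda>i. F i x - F i y - l / 2 * (norm (x - y))\<^sup>2) ` {..<m}) \<le> F 0 x - F 0 z0" .
  qed
  have "upsilon l s * D \<le> merit_u S m F l x"
    unfolding merit_u_def using minge cSUP_upper[OF yS bdd] by linarith
  moreover have "(INF xs\<in>{xs. pareto_optimal S m F xs}. (norm (x - xs))\<^sup>2) \<le> D"
    unfolding D_def using po by (intro cINF_lower bdd_belowI2[where m=0]) auto
  ultimately show "upsilon l (Min (sig ` {..<m})) * (INF xs\<in>{xs. pareto_optimal S m F xs}. (norm (x - xs))\<^sup>2) \<le> merit_u S m F l x"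
    using ub(4) unfolding s_def[symmetric]
    by (meson mult_left_mono order_trans)
qed

end
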